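(* Let $(\Gamma,\rho)$ be a weakly connected voltage graph with finite voltage group $G$, with local groups $\{G_i\}$ and directed local groups $\{G_i^*\}$. Then: (1) If $\Gamma$ is strongly connected, then $G_i^*=G_i$ for every vertex $v_i$. (2) If vertices $v_i,v_j$ are mutually reachable, then for any walk $w_{ij}$ from $v_i$ to $v_j$, $G_j^*=f(w_{ij})^{-1}\cdot G_i^*\cdot f(w_{ij})$.
   Context: $\Gamma=(V,E)$ simple digraph, $e_{ij}$ the edge $v_i\to v_j$, $\rho:E\to G$. Semi-walk $w=v_{i_1}a_1\dots a_{n-1}v_{i_n}$ with each $a_j\in\{e_{i_ji_{j+1}},e_{i_{j+1}i_j}\}$; walk if all $a_j=e_{i_ji_{j+1}}$; closed if $v_{i_1}=v_{i_n}$; path: walk with distinct vertices. Weakly connected: any two vertices joined by a semi-walk; strongly connected: every ordered pair of distinct vertices joined by a path; $v_i,v_j$ mutually reachable: there is a path from $v_i$ to $v_j$ and one from $v_j$ to $v_i$. Net voltage $f(w)=\bar\rho(a_1)\cdots\bar\rho(a_{n-1})$ with $\bar\rho(a_j)=\rho(a_j)$ for forward and $\rho(a_j)^{-1}$ for backward edges ($f=\mathbf 1$ on a single vertex). $G_i=\{f(w): w$ closed semi-walk at $v_i\}$, $G_i^*=\{f(w): w$ closed walk at $v_i\}$. *)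

theory Defs
  imports "HOL-Algebra.Group"
begin

text \<open>A semi-walk starting at u is a list of steps (b, v): b = True means the
  step traverses the edge u -> v forwards, b = False means it traverses the edge v -> u
  backwards. Since the digraph is simple, an edge is determined by its endpoints.\<close>

definition simple_digraph :: "'v set \<Rightarrow> ('v \<times> 'v) set \<Rightarrow> bool" where
  "simple_digraph V E \<longleftrightarrow> E \<subseteq> V \<times> V \<and> (\<forall>v. (v, v) \<notin> E)"

fun semiwalk_steps :: "('v \<times> 'v) set \<Rightarrow> 'v \<Rightarrow> (bool \<times> 'v) list \<Rightarrow> bool" where
  "semiwalk_steps E u [] = True"
| "semiwalk_steps E u ((b, v) # s) =
     ((if b then (u, v) \<in> E else (v, u) \<in> E) \<and> semiwalk_steps E v s)"

definition is_semiwalk :: "'v set \<Rightarrow> ('v \<times> 'v) set \<Rightarrow> 'v \<Rightarrow> (bool \<times> 'v) list \<Rightarrow> bool" where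
  "is_semiwalk V E u s \<longleftrightarrow> u \<in> V \<and> semiwalk_steps E u s"

definition is_walk :: "'v set \<Rightarrow> ('v \<times> 'v) set \<Rightarrow> 'v \<Rightarrow> (bool \<times> 'v) list \<Rightarrow> bool" where
  "is_walk V E u s \<longleftrightarrow> is_semiwalk V E u s \<and> (\<forall>st \<in> set s. fst st)"

fun walk_end :: "'v \<Rightarrow> (bool \<times> 'v) list \<Rightarrow> 'v" where
  "walk_end u [] = u"
| "walk_end u ((b, v) # s) = walk_end v s"

definition walk_verts :: "'v \<Rightarrow> (bool \<times> 'v) list \<Rightarrow> 'v list" where
  "walk_verts u s = u # map snd s"

definition is_path :: "'v set \<Rightarrow> ('v \<times> 'v) set \<Rightarrow> 'v \<Rightarrow> (bool \<times> 'v) list \<Rightarrow> bool" where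
  "is_path V E u s \<longleftrightarrow> is_walk V E u s \<and> distinct (walk_verts u s)"

fun net_voltage :: "('g, 'b) monoid_scheme \<Rightarrow> ('v \<times> 'v \<Rightarrow> 'g) \<Rightarrow> 'v \<Rightarrow> (bool \<times> 'v) list \<Rightarrow> 'g" where
  "net_voltage G \<rho> u [] = \<one>\<^bsub>G\<^esub>"
| "net_voltage G \<rho> u ((b, v) # s) =
     (if b then \<rho> (u, v) else inv\<^bsub>G\<^esub> (\<rho> (v, u))) \<otimes>\<^bsub>G\<^esub> net_voltage G \<rho> v s"

definition weakly_connected :: "'v set \<Rightarrow> ('v \<times> 'v) set \<Rightarrow> bool" where
  "weakly_connected V E \<longleftrightarrow>
     (\<forall>u \<in> V. \<forall>v \<in> V. \<exists>s. is_semiwalk V E u s \<and> walk_end u s = v)"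

definition strongly_connected :: "'v set \<Rightarrow> ('v \<times> 'v) set \<Rightarrow> bool" where
  "strongly_connected V E \<longleftrightarrow>
     (\<forall>u \<in> V. \<forall>v \<in> V. u \<noteq> v \<longrightarrow> (\<exists>s. is_path V E u s \<and> walk_end u s = v))"

definition mutually_reachable :: "'v set \<Rightarrow> ('v \<times> 'v) set \<Rightarrow> 'v \<Rightarrow> 'v \<Rightarrow> bool" where
  "mutually_reachable V E u v \<longleftrightarrow>
     (\<exists>s. is_path V E u s \<and> walk_end u s = v) \<and> (\<exists>s. is_path V E v s \<and> walk_end v s = u)"

definition local_group :: "('g, 'b) monoid_scheme \<Rightarrow> 'v set \<Rightarrow> ('v \<times> 'v) set \<Rightarrow> ('v \<times> 'v \<Rightarrow> 'g) \<Rightarrow> 'v \<Rightarrow> 'g set" where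
  "local_group G V E \<rho> u = {net_voltage G \<rho> u s | s. is_semiwalk V E u s \<and> walk_end u s = u}"

definition directed_local_group :: "('g, 'b) monoid_scheme \<Rightarrow> 'v set \<Rightarrow> ('v \<times> 'v) set \<Rightarrow> ('v \<times> 'v \<Rightarrow> 'g) \<Rightarrow> 'v \<Rightarrow> 'g set" where
  "directed_local_group G V E \<rho> u = {net_voltage G \<rho> u s | s. is_walk V E u s \<and> walk_end u s = u}"

end

theory Submission imports Defs begin

lemma sw_append: "semiwalk_steps E u (s@t) = (semiwalk_steps E u s \<and> semiwalk_steps E (walk_end u s) t)"
  by (induction s arbitrary: u) auto

lemma we_append: "walk_end u (s@t) = walk_end (walk_end u s) t"
  by (induction s arbitrary: u) auto

lemma we_in_V: "semiwalk_steps E u s \<Longrightarrow> u \<in> V \<Longrightarrow> E \<subseteq> V \<times> V \<Longrightarrow> walk_end u s \<in> V"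
proof (induction s arbitrary: u)
  case (Cons a s)
  obtain b v where a: "a = (b,v)" by fastforce
  have "v \<in> V" using Cons.prems a by (cases b) auto
  then show ?case using Cons a by simp
qed simp

lemma (in group) nv_closed: "\<forall>e\<in>E. \<rho> e \<in> carrier G \<Longrightarrow> semiwalk_steps E u s \<Longrightarrow> net_voltage G \<rho> u s \<in> carrier G"
  by (induction s arbitrary: u) auto

lemma (in group) nv_append: "\<forall>e\<in>E. \<rho> e \<in> carrier G \<Longrightarrow> semiwalk_steps E u s \<Longrightarrow> semiwalk_steps E (walk_end u s) t
  \<Longrightarrow> net_voltage G \<rho> u (s@t) = net_voltage G \<rho> u s \<otimes> net_voltage G \<rho> (walk_end u s) t"
  by (induction s arbitrary: u) (auto simp: m_assoc nv_closed)

lemma walk_append: "E \<subseteq> V \<times> V \<Longrightarrow> is_walk V E u (s@t) = (is_walk V E u s \<and> is_walk V E (walk_end u s) t)"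
  unfolding is_walk_def is_semiwalk_def using we_in_V[of E u s V] by (auto simp: sw_append)

lemma (in group) finite_submonoid_subgroup:
  assumes "finite H" "H \<subseteq> carrier G" "\<one> \<in> H" "\<And>a b. a \<in> H \<Longrightarrow> b \<in> H \<Longrightarrow> a \<otimes> b \<in> H"
  shows "subgroup H G"
proof (rule subgroupI)
  fix a assume a: "a \<in> H"
  have "(\<lambda>x. a \<otimes> x) ` H = H"
  proof (rule endo_inj_surj)
    show "inj_on ((\<otimes>) a) H" using a assms(2) by (intro inj_onI) (metis in_mono Units_eq Units_l_cancel)
  qed (use assms a in auto)
  then obtain x where x: "x \<in> H" "a \<otimes> x = \<one>" using assms(3) by (metis imageE)
  then have "x = inv a" using a assms(2) by (metis in_mono inv_equality l_inv_ex m_assoc l_one r_one) 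
  then show "inv a \<in> H" using x by simp
qed (use assms in auto)

lemma (in group) cancel1: "x \<in> carrier G \<Longrightarrow> y \<in> carrier G \<Longrightarrow> x \<otimes> (inv x \<otimes> y) = y"
  by (metis inv_closed m_assoc r_inv l_one)
lemma (in group) cancel2: "x \<in> carrier G \<Longrightarrow> y \<in> carrier G \<Longrightarrow> inv x \<otimes> (x \<otimes> y) = y"
  by (metis inv_closed m_assoc l_inv l_one)

lemma (in group) alg1:
  assumes "a \<in> carrier G" "c \<in> carrier G" "a' \<in> carrier G" "r \<in> carrier G" "s \<in> carrier G" "b \<in> carrier G"
  shows "(a \<otimes> c) \<otimes> inv (a' \<otimes> r \<otimes> c) \<otimes> (a' \<otimes> s \<otimes> b) = a \<otimes> (inv r \<otimes> s) \<otimes> b"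
  using assms by (simp add: m_assoc inv_mult_group cancel1 cancel2)

lemma (in group) alg2:
  assumes "d \<in> carrier G" "s \<in> carrier G" "w \<in> carrier G"
  shows "d = inv s \<otimes> ((s \<otimes> d \<otimes> w) \<otimes> inv (s \<otimes> w)) \<otimes> s"
  using assms by (simp add: m_assoc inv_mult_group cancel1 cancel2)

lemma (in group) alg3:
  assumes "g \<in> carrier G" "s \<in> carrier G" "w \<in> carrier G"
  shows "inv s \<otimes> g \<otimes> s = w \<otimes> (inv (s \<otimes> w) \<otimes> g) \<otimes> s"
  using assms by (simp add: m_assoc inv_mult_group cancel1 cancel2)

lemma (in group) H_subgroup:
  assumes fin: "finite (carrier G)" and EV: "E \<subseteq> V \<times> V"
    and rho: "\<forall>e \<in> E. \<rho> e \<in> carrier G" and i: "i \<in> V"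
  shows "subgroup (directed_local_group G V E \<rho> i) G"
proof -
  let ?H = "directed_local_group G V E \<rho> i"
  have sub: "?H \<subseteq> carrier G"
    unfolding directed_local_group_def is_walk_def is_semiwalk_def using nv_closed[OF rho] by blast
  show ?thesis
  proof (rule finite_submonoid_subgroup)
    show "finite ?H" using sub fin finite_subset by blast
    show "?H \<subseteq> carrier G" by (rule sub)
    show "\<one> \<in> ?H" unfolding directed_local_group_def
      by (rule CollectI, rule exI[of _ "[]"]) (simp add: is_walk_def is_semiwalk_def i)
  next
    fix a b assume a: "a \<in> ?H" and b: "b \<in> ?H"
    then obtain s t where s: "a = net_voltage G \<rho> i s" "is_walk V E i s" "walk_end i s = i"
      and t: "b = net_voltage G \<rho> i t" "is_walk V E i t" "walk_end i t = i"
      unfolding directed_local_group_def by blast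
    have "a \<otimes> b = net_voltage G \<rho> i (s @ t)"
      using s t nv_append[OF rho, of i s t] by (simp add: is_walk_def is_semiwalk_def)
    moreover have "is_walk V E i (s@t)" "walk_end i (s@t) = i"
      using s t by (auto simp: walk_append[OF EV] we_append)
    ultimately show "a \<otimes> b \<in> ?H" unfolding directed_local_group_def by blast
  qed
qed

lemma dlg_mem: "is_walk V E i a \<Longrightarrow> walk_end i a = i \<Longrightarrow> net_voltage G \<rho> i a \<in> directed_local_group G V E \<rho> i"
  unfolding directed_local_group_def by blast

lemma walk_single: "(x, v) \<in> E \<Longrightarrow> E \<subseteq> V \<times> V \<Longrightarrow> is_walk V E x [(True, v)]"
  unfolding is_walk_def is_semiwalk_def by auto

lemma (in group) key1:
  assumes fin: "finite (carrier G)" and EV: "E \<subseteq> V \<times> V"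
    and rho: "\<forall>e \<in> E. \<rho> e \<in> carrier G" and i: "i \<in> V"
    and reach: "\<forall>x\<in>V. \<forall>y\<in>V. \<exists>w. is_walk V E x w \<and> walk_end x w = y"
  shows "semiwalk_steps E x s \<Longrightarrow> x \<in> V \<Longrightarrow> is_walk V E i a \<Longrightarrow> walk_end i a = x
     \<Longrightarrow> is_walk V E (walk_end x s) b \<Longrightarrow> walk_end (walk_end x s) b = i
     \<Longrightarrow> net_voltage G \<rho> i a \<otimes>\<^bsub>G\<^esub> net_voltage G \<rho> x s \<otimes>\<^bsub>G\<^esub> net_voltage G \<rho> (walk_end x s) b
         \<in> directed_local_group G V E \<rho> i"
proof (induction s arbitrary: x a)
  case Nil
  have "net_voltage G \<rho> i (a @ b) = net_voltage G \<rho> i a \<otimes> net_voltage G \<rho> x b"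
    using Nil nv_append[OF rho, of i a b] by (simp add: is_walk_def is_semiwalk_def)
  moreover have "is_walk V E i (a@b)" "walk_end i (a@b) = i"
    using Nil by (auto simp: walk_append[OF EV] we_append)
  ultimately show ?case using Nil dlg_mem[of V E i "a@b" G \<rho>]
    by (simp add: is_walk_def is_semiwalk_def nv_closed[OF rho])
next
  case (Cons st s)
  obtain c v where st: "st = (c, v)" by fastforce
  show ?case
  proof (cases c)
    case True
    have e: "(x, v) \<in> E" using Cons.prems st True by simp
    have v: "v \<in> V" using e EV by auto
    let ?a = "a @ [(True, v)]"
    have wa: "is_walk V E i ?a" "walk_end i ?a = v"
      using Cons.prems walk_single[OF e EV] by (auto simp: walk_append[OF EV] we_append)
    have nva: "net_voltage G \<rho> i ?a = net_voltage G \<rho> i a \<otimes> \<rho> (x, v)"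
      using Cons.prems nv_append[OF rho, of i a "[(True,v)]"] e rho
      by (simp add: is_walk_def is_semiwalk_def)
    have sw: "semiwalk_steps E v s" using Cons.prems st by simp
    have IH: "net_voltage G \<rho> i ?a \<otimes> net_voltage G \<rho> v s \<otimes> net_voltage G \<rho> (walk_end v s) b
         \<in> directed_local_group G V E \<rho> i"
      using Cons.IH[OF sw v wa] Cons.prems st by simp
    have "net_voltage G \<rho> i a \<otimes> net_voltage G \<rho> x (st # s) \<otimes> net_voltage G \<rho> (walk_end x (st # s)) b
       = net_voltage G \<rho> i ?a \<otimes> net_voltage G \<rho> v s \<otimes> net_voltage G \<rho> (walk_end v s) b"
      using nva st True Cons.prems e rho sw nv_closed[OF rho]
      by (simp add: is_walk_def is_semiwalk_def m_assoc)
    then show ?thesis using IH by simp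
  next
    case False
    have e: "(v, x) \<in> E" using Cons.prems st False by simp
    have v: "v \<in> V" using e EV by auto
    obtain a' where a': "is_walk V E i a'" "walk_end i a' = v" using reach i v by blast
    obtain cw where cw: "is_walk V E x cw" "walk_end x cw = i" using reach i Cons.prems(2) by blast
    have sw: "semiwalk_steps E v s" using Cons.prems st by simp
    have IH: "net_voltage G \<rho> i a' \<otimes> net_voltage G \<rho> v s \<otimes> net_voltage G \<rho> (walk_end v s) b
         \<in> directed_local_group G V E \<rho> i"
      using Cons.IH[OF sw v a'] Cons.prems st by simp
    have h1: "net_voltage G \<rho> i a \<otimes> net_voltage G \<rho> x cw \<in> directed_local_group G V E \<rho> i"
    proof -
      have "net_voltage G \<rho> i (a @ cw) = net_voltage G \<rho> i a \<otimes> net_voltage G \<rho> x cw"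
        using Cons.prems cw nv_append[OF rho, of i a cw] by (simp add: is_walk_def is_semiwalk_def)
      moreover have "is_walk V E i (a@cw)" "walk_end i (a@cw) = i"
        using Cons.prems cw by (auto simp: walk_append[OF EV] we_append)
      ultimately show ?thesis using dlg_mem[of V E i "a@cw" G \<rho>] by simp
    qed
    have h2: "net_voltage G \<rho> i a' \<otimes> \<rho> (v, x) \<otimes> net_voltage G \<rho> x cw \<in> directed_local_group G V E \<rho> i"
    proof -
      let ?w = "a' @ (True, x) # cw"
      have w1: "is_walk V E v ((True, x) # cw)" using cw e v unfolding is_walk_def is_semiwalk_def by auto
      have "net_voltage G \<rho> i ?w = net_voltage G \<rho> i a' \<otimes> (\<rho> (v, x) \<otimes> net_voltage G \<rho> x cw)"
        using a' w1 nv_append[OF rho, of i a' "(True, x) # cw"] by (simp add: is_walk_def is_semiwalk_def)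
      moreover have "is_walk V E i ?w" "walk_end i ?w = i"
        using a' cw w1 by (auto simp: walk_append[OF EV] we_append)
      ultimately show ?thesis using dlg_mem[of V E i ?w G \<rho>] a' cw e rho nv_closed[OF rho]
        by (simp add: m_assoc is_walk_def is_semiwalk_def)
    qed
    interpret H: subgroup "directed_local_group G V E \<rho> i" G
      by (rule H_subgroup[OF fin EV rho i])
    have cl: "net_voltage G \<rho> i a \<in> carrier G" "net_voltage G \<rho> x cw \<in> carrier G"
      "net_voltage G \<rho> i a' \<in> carrier G" "\<rho> (v, x) \<in> carrier G" "net_voltage G \<rho> v s \<in> carrier G"
      "net_voltage G \<rho> (walk_end v s) b \<in> carrier G"
      using Cons.prems cw a' e rho sw nv_closed[OF rho] st by (auto simp: is_walk_def is_semiwalk_def)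
    have "net_voltage G \<rho> i a \<otimes> net_voltage G \<rho> x (st # s) \<otimes> net_voltage G \<rho> (walk_end x (st # s)) b
      = (net_voltage G \<rho> i a \<otimes> net_voltage G \<rho> x cw) \<otimes> inv (net_voltage G \<rho> i a' \<otimes> \<rho> (v, x) \<otimes> net_voltage G \<rho> x cw)
        \<otimes> (net_voltage G \<rho> i a' \<otimes> net_voltage G \<rho> v s \<otimes> net_voltage G \<rho> (walk_end v s) b)"
      using alg1[OF cl(1,2,3,4,5,6)] st False by simp
    then show ?thesis using IH h1 h2 H.m_closed H.m_inv_closed by simp
  qed
qed

lemma (in group) main_aux:
  fixes V :: "'v set" and E :: "('v \<times> 'v) set"
    and \<rho> :: "'v \<times> 'v \<Rightarrow> 'a"
  assumes fin: "finite (carrier G)" and EV: "E \<subseteq> V \<times> V"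
    and rho: "\<forall>e \<in> E. \<rho> e \<in> carrier G"
  shows "(strongly_connected V E \<longrightarrow>
            (\<forall>u \<in> V. directed_local_group G V E \<rho> u = local_group G V E \<rho> u))
       \<and> (\<forall>u \<in> V. \<forall>v \<in> V. mutually_reachable V E u v \<longrightarrow>
            (\<forall>s. is_walk V E u s \<and> walk_end u s = v \<longrightarrow>
               directed_local_group G V E \<rho> v =
                 (\<lambda>g. inv\<^bsub>G\<^esub> (net_voltage G \<rho> u s) \<otimes>\<^bsub>G\<^esub> g \<otimes>\<^bsub>G\<^esub> net_voltage G \<rho> u s)
                   ` directed_local_group G V E \<rho> u))"
proof -
  have P1: "\<forall>u \<in> V. directed_local_group G V E \<rho> u = local_group G V E \<rho> u"
    if sc: "strongly_connected V E"
  proof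
    fix u assume u: "u \<in> V"
    have reach: "\<forall>x\<in>V. \<forall>y\<in>V. \<exists>w. is_walk V E x w \<and> walk_end x w = y"
    proof (intro ballI)
      fix x y assume "x \<in> V" "y \<in> V"
      show "\<exists>w. is_walk V E x w \<and> walk_end x w = y"
      proof (cases "x = y")
        case True then show ?thesis using \<open>x \<in> V\<close>
          by (intro exI[of _ "[]"]) (simp add: is_walk_def is_semiwalk_def)
      next
        case False then show ?thesis using sc \<open>x \<in> V\<close> \<open>y \<in> V\<close>
          unfolding strongly_connected_def is_path_def by blast
      qed
    qed
    show "directed_local_group G V E \<rho> u = local_group G V E \<rho> u"
    proof
      show "directed_local_group G V E \<rho> u \<subseteq> local_group G V E \<rho> u"
        unfolding directed_local_group_def local_group_def is_walk_def by blast
    next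
      show "local_group G V E \<rho> u \<subseteq> directed_local_group G V E \<rho> u"
      proof
        fix g assume "g \<in> local_group G V E \<rho> u"
        then obtain s where s: "g = net_voltage G \<rho> u s" "is_semiwalk V E u s" "walk_end u s = u"
          unfolding local_group_def by blast
        have w0: "is_walk V E u []" using u by (simp add: is_walk_def is_semiwalk_def)
        have "net_voltage G \<rho> u [] \<otimes> net_voltage G \<rho> u s \<otimes> net_voltage G \<rho> (walk_end u s) []
              \<in> directed_local_group G V E \<rho> u"
          using key1[OF fin EV rho u reach, of u s "[]" "[]"] s u w0 by (simp add: is_semiwalk_def)
        then show "g \<in> directed_local_group G V E \<rho> u"
          using s nv_closed[OF rho] by (simp add: is_semiwalk_def)
      qed
    qed
  qed
  have P2: "directed_local_group G V E \<rho> v =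
                 (\<lambda>g. inv (net_voltage G \<rho> u s) \<otimes> g \<otimes> net_voltage G \<rho> u s)
                   ` directed_local_group G V E \<rho> u"
    if u: "u \<in> V" and v: "v \<in> V" and mr: "mutually_reachable V E u v"
      and sw: "is_walk V E u s" and se: "walk_end u s = v" for u v s
  proof -
    obtain w where w: "is_walk V E v w" "walk_end v w = u"
      using mr unfolding mutually_reachable_def is_path_def by blast
    let ?f = "net_voltage G \<rho> u s" and ?g = "net_voltage G \<rho> v w"
    interpret H: subgroup "directed_local_group G V E \<rho> u" G
      by (rule H_subgroup[OF fin EV rho u])
    have fc: "?f \<in> carrier G" "?g \<in> carrier G"
      using sw w nv_closed[OF rho] by (auto simp: is_walk_def is_semiwalk_def)
    have h: "?f \<otimes> ?g \<in> directed_local_group G V E \<rho> u"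
    proof -
      have "net_voltage G \<rho> u (s @ w) = ?f \<otimes> ?g"
        using sw se w nv_append[OF rho, of u s w] by (simp add: is_walk_def is_semiwalk_def)
      moreover have "is_walk V E u (s@w)" "walk_end u (s@w) = u"
        using sw se w by (auto simp: walk_append[OF EV] we_append)
      ultimately show ?thesis using dlg_mem[of V E u "s@w" G \<rho>] by simp
    qed
    show ?thesis
    proof
      show "directed_local_group G V E \<rho> v \<subseteq> (\<lambda>g. inv ?f \<otimes> g \<otimes> ?f) ` directed_local_group G V E \<rho> u"
      proof
        fix d assume "d \<in> directed_local_group G V E \<rho> v"
        then obtain t where t: "d = net_voltage G \<rho> v t" "is_walk V E v t" "walk_end v t = v"
          unfolding directed_local_group_def by blast
        have dc: "d \<in> carrier G" using t nv_closed[OF rho] by (auto simp: is_walk_def is_semiwalk_def)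
        have k: "?f \<otimes> d \<otimes> ?g \<in> directed_local_group G V E \<rho> u"
        proof -
          have "net_voltage G \<rho> u (s @ t @ w) = ?f \<otimes> (d \<otimes> ?g)"
            using sw se w t nv_append[OF rho, of u s "t@w"] nv_append[OF rho, of v t w]
            by (simp add: is_walk_def is_semiwalk_def sw_append)
          moreover have "is_walk V E u (s@t@w)" "walk_end u (s@t@w) = u"
            using sw se w t by (auto simp: walk_append[OF EV] we_append)
          ultimately show ?thesis using dlg_mem[of V E u "s@t@w" G \<rho>] dc fc by (simp add: m_assoc)
        qed
        have "d = inv ?f \<otimes> ((?f \<otimes> d \<otimes> ?g) \<otimes> inv (?f \<otimes> ?g)) \<otimes> ?f"
          by (rule alg2[OF dc fc])
        moreover have "(?f \<otimes> d \<otimes> ?g) \<otimes> inv (?f \<otimes> ?g) \<in> directed_local_group G V E \<rho> u"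
          using k h H.m_closed H.m_inv_closed by simp
        ultimately show "d \<in> (\<lambda>g. inv ?f \<otimes> g \<otimes> ?f) ` directed_local_group G V E \<rho> u" by blast
      qed
    next
      show "(\<lambda>g. inv ?f \<otimes> g \<otimes> ?f) ` directed_local_group G V E \<rho> u \<subseteq> directed_local_group G V E \<rho> v"
      proof
        fix x assume "x \<in> (\<lambda>g. inv ?f \<otimes> g \<otimes> ?f) ` directed_local_group G V E \<rho> u"
        then obtain g where g: "g \<in> directed_local_group G V E \<rho> u" "x = inv ?f \<otimes> g \<otimes> ?f" by blast
        have gc: "g \<in> carrier G" using g H.subset by blast
        have "inv (?f \<otimes> ?g) \<otimes> g \<in> directed_local_group G V E \<rho> u"
          using g h H.m_closed H.m_inv_closed by simp
        then obtain c where c: "inv (?f \<otimes> ?g) \<otimes> g = net_voltage G \<rho> u c" "is_walk V E u c" "walk_end u c = u"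
          unfolding directed_local_group_def by blast
        have "net_voltage G \<rho> v (w @ c @ s) = ?g \<otimes> (net_voltage G \<rho> u c \<otimes> ?f)"
          using sw se w c nv_append[OF rho, of v w "c@s"] nv_append[OF rho, of u c s]
          by (simp add: is_walk_def is_semiwalk_def sw_append)
        also have "\<dots> = x"
        proof -
          have cc: "net_voltage G \<rho> u c \<in> carrier G" using c nv_closed[OF rho] by (auto simp: is_walk_def is_semiwalk_def)
          show ?thesis using g(2) c(1) alg3[OF gc fc] fc gc cc by (simp add: m_assoc)
        qed
        finally have "net_voltage G \<rho> v (w @ c @ s) = x" .
        moreover have "is_walk V E v (w@c@s)" "walk_end v (w@c@s) = v"
          using sw se w c by (auto simp: walk_append[OF EV] we_append)
        ultimately show "x \<in> directed_local_group G V E \<rho> v" using dlg_mem[of V E v "w@c@s" G \<rho>] by simp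
      qed
    qed
  qed
  show ?thesis using P1 P2 by blast
qed


theorem corollary2:
  fixes G :: "('g, 'b) monoid_scheme" and V :: "'v set" and E :: "('v \<times> 'v) set"
    and \<rho> :: "'v \<times> 'v \<Rightarrow> 'g"
  assumes "group G" and "finite (carrier G)"
    and "simple_digraph V E"
    and "\<forall>e \<in> E. \<rho> e \<in> carrier G"
    and "weakly_connected V E"
  shows "(strongly_connected V E \<longrightarrow>
            (\<forall>u \<in> V. directed_local_group G V E \<rho> u = local_group G V E \<rho> u))
       \<and> (\<forall>u \<in> V. \<forall>v \<in> V. mutually_reachable V E u v \<longrightarrow>
            (\<forall>s. is_walk V E u s \<and> walk_end u s = v \<longrightarrow>
               directed_local_group G V E \<rho> v =
                 (\<lambda>g. inv\<^bsub>G\<^esub> (net_voltage G \<rho> u s) \<otimes>\<^bsub>G\<^esub> g \<otimes>\<^bsub>G\<^esub> net_voltage G \<rho> u s)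
                   ` directed_local_group G V E \<rho> u))"
proof -
  have EV: "E \<subseteq> V \<times> V" using assms(3) by (simp add: simple_digraph_def)
  show ?thesis by (rule group.main_aux[OF assms(1) assms(2) EV assms(4)])
qed

end
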